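(* Let $d:\mathbb{N}\to\mathbb{N}$ be a function with $d(n)^3\log n/n\to 0$ as $n\to\infty$. Then there is a function $\eta:\mathbb{N}\to[0,\infty)$ with $\eta(n)\to 0$ as $n\to\infty$ such that for every $n$ (for which $d(n)$-regular graphs on $n$ vertices exist), every $d$-regular graph $G$ on $n$ vertices, where $d=d(n)$, contains a spanning subgraph $H$ such that for every integer $k$ with $0\le k\le d$, $$\left|m(H,k)-\frac{n}{d+1}\right|\le \eta(n)\,\frac{n}{d+1}.$$
   Context: All graphs are finite and simple (no loops, no parallel edges). For a graph $G$ and an integer $k\ge 0$, $m(G,k)$ denotes the number of vertices of degree exactly $k$ in $G$, and $m(G)=\max_k m(G,k)$. A spanning subgraph of $G$ is a subgraph with the same vertex set as $G$. *)

theory Defs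
  imports Complex_Main
begin

definition is_graph :: "nat \<Rightarrow> nat set set \<Rightarrow> bool" where
  "is_graph n E \<longleftrightarrow> (\<forall>e\<in>E. e \<subseteq> {..<n} \<and> card e = 2)"

definition degree :: "nat set set \<Rightarrow> nat \<Rightarrow> nat" where
  "degree E v = card {e\<in>E. v \<in> e}"

definition regular :: "nat \<Rightarrow> nat set set \<Rightarrow> nat \<Rightarrow> bool" where
  "regular n E d \<longleftrightarrow> (\<forall>v<n. degree E v = d)"

definition mdeg :: "nat \<Rightarrow> nat set set \<Rightarrow> nat \<Rightarrow> nat" where
  "mdeg n H k = card {v\<in>{..<n}. degree H v = k}"

definition spanning_subgraph :: "nat \<Rightarrow> nat set set \<Rightarrow> nat set set \<Rightarrow> bool" where
  "spanning_subgraph n H G \<longleftrightarrow> is_graph n H \<and> H \<subseteq> G"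

end

theory Submission
  imports Defs "HOL-Library.FuncSet"
begin


definition merge :: "'a set \<Rightarrow> ('a \<Rightarrow> 'b) \<Rightarrow> ('a \<Rightarrow> 'b) \<Rightarrow> 'a \<Rightarrow> 'b" where
  "merge A y z = (\<lambda>i. if i \<in> A then y i else z i)"

lemma card_PiE_split:
  assumes fin: "finite A" "finite J" "A \<inter> J = {}" "\<And>i. finite (T i)"
  shows "card {x \<in> PiE (A \<union> J) T. P x} = (\<Sum>z\<in>PiE J T. card {y \<in> PiE A T. P (merge A y z)})"
proof -
  let ?S = "Sigma (PiE J T) (\<lambda>z. {y \<in> PiE A T. P (merge A y z)})"
  have eq: "{x \<in> PiE (A \<union> J) T. P x} = (\<lambda>(z,y). merge A y z) ` ?S"
  proof (rule set_eqI, rule iffI)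
    fix x assume x: "x \<in> {x \<in> PiE (A \<union> J) T. P x}"
    have "x = merge A (restrict x A) (restrict x J)"
      using x by (auto simp: merge_def fun_eq_iff PiE_def extensional_def)
    moreover have "(restrict x J, restrict x A) \<in> ?S"
      using x \<open>x = merge A (restrict x A) (restrict x J)\<close> by (auto simp: PiE_def)
    ultimately show "x \<in> (\<lambda>(z,y). merge A y z) ` ?S"
      by (intro image_eqI[where x="(restrict x J, restrict x A)"]) auto
  next
    fix x assume "x \<in> (\<lambda>(z,y). merge A y z) ` ?S"
    then obtain z y where zy: "z \<in> PiE J T" "y \<in> PiE A T" "P (merge A y z)" "x = merge A y z" by auto
    then show "x \<in> {x \<in> PiE (A \<union> J) T. P x}"
      by (auto simp: merge_def PiE_def extensional_def Pi_def)
  qed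
  have inj: "inj_on (\<lambda>(z,y). merge A y z) ?S"
  proof (rule inj_onI, clarsimp)
    fix z y z' y'
    assume "z \<in> PiE J T" "y \<in> PiE A T" "z' \<in> PiE J T" "y' \<in> PiE A T"
      and e: "merge A y z = merge A y' z'"
    then show "z = z' \<and> y = y'" using assms(3)
      by (auto simp: fun_eq_iff merge_def PiE_def extensional_def) (metis disjoint_iff)+
  qed
  have "card {x \<in> PiE (A \<union> J) T. P x} = card ?S" unfolding eq by (rule card_image[OF inj])
  also have "\<dots> = (\<Sum>z\<in>PiE J T. card {y \<in> PiE A T. P (merge A y z)})"
    by (rule card_SigmaI) (auto intro!: finite_PiE assms)
  finally show ?thesis .
qed

lemma card_PiE_insert:
  assumes "x \<notin> S" "finite S" "\<And>i. finite (T i)"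
  shows "card {f \<in> PiE (insert x S) T. P f} = (\<Sum>a\<in>T x. card {g\<in>PiE S T. P (g(x:=a))})"
proof -
  let ?S = "Sigma (T x) (\<lambda>a. {g\<in>PiE S T. P (g(x:=a))})"
  have eq: "{f \<in> PiE (insert x S) T. P f} = (\<lambda>(y, g). g(x := y)) ` ?S"
    unfolding PiE_insert_eq by auto
  have inj: "inj_on (\<lambda>(y, g). g(x := y)) ?S"
    by (rule inj_on_subset[OF inj_combinator[OF assms(1)]]) auto
  have "card {f \<in> PiE (insert x S) T. P f} = card ?S" unfolding eq by (rule card_image[OF inj])
  also have "\<dots> = (\<Sum>a\<in>T x. card {g\<in>PiE S T. P (g(x:=a))})" by (rule card_SigmaI) (auto intro!: finite_PiE assms)
  finally show ?thesis .
qed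


lemma sum_if_less:
  assumes "t \<le> N"
  shows "(\<Sum>a<N. if a < t then X else Y) = t * X + (N - t) * (Y::nat)"
proof -
  have "(\<Sum>a<N. if a < t then X else Y) = (\<Sum>a\<in>{..<N} \<inter> {a. a < t}. X) + (\<Sum>a\<in>{..<N} \<inter> - {a. a < t}. Y)"
    by (rule sum.If_cases) simp
  moreover have "{..<N} \<inter> {a. a < t} = {..<t}" using assms by auto
  moreover have "{..<N} \<inter> - {a. a < t} = {t..<N}" by auto
  ultimately show ?thesis by simp
qed

lemma count_below:
  assumes "finite M" "t \<le> N"
  shows "card {y \<in> PiE M (\<lambda>_. {..<N}). card {u\<in>M. y u < t} = j}
         = (card M choose j) * t^j * (N-t)^(card M - j)"
  using assms(1)
proof (induction M arbitrary: j rule: finite_induct)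
  case empty
  then show ?case by (cases j) auto
next
  case (insert x M)
  define F where "F j = card {y \<in> PiE M (\<lambda>_. {..<N}). card {u\<in>M. y u < t} = j}" for j
  have key: "card {u\<in>insert x M. (g(x:=a)) u < t} = (if a < t then 1 else 0) + card {u\<in>M. g u < t}" for g a
  proof -
    have e: "{u\<in>M. (g(x:=a)) u < t} = {u\<in>M. g u < t}" using insert(2) by auto
    show ?thesis
    proof (cases "a < t")
      case True
      then have "{u\<in>insert x M. (g(x:=a)) u < t} = insert x {u\<in>M. (g(x:=a)) u < t}" by auto
      then show ?thesis using True e insert(1,2) by simp
    next
      case False
      then have "{u\<in>insert x M. (g(x:=a)) u < t} = {u\<in>M. (g(x:=a)) u < t}" by auto
      then show ?thesis using False e by simp
    qed
  qed
  have "card {y \<in> PiE (insert x M) (\<lambda>_. {..<N}). card {u\<in>insert x M. y u < t} = j}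
      = (\<Sum>a<N. card {g \<in> PiE M (\<lambda>_. {..<N}). card {u\<in>insert x M. (g(x:=a)) u < t} = j})"
    by (rule card_PiE_insert) (use insert in auto)
  also have "\<dots> = (\<Sum>a<N. if a < t then (if j = 0 then 0 else F (j - 1)) else F j)"
  proof (rule sum.cong[OF refl])
    fix a assume "a \<in> {..<N}"
    have "{g \<in> PiE M (\<lambda>_. {..<N}). card {u\<in>insert x M. (g(x:=a)) u < t} = j}
        = {g \<in> PiE M (\<lambda>_. {..<N}). (if a < t then 1 else 0) + card {u\<in>M. g u < t} = j}"
      unfolding key by (rule refl)
    also have "\<dots> = (if a < t then (if j = 0 then {} else {g \<in> PiE M (\<lambda>_. {..<N}). card {u\<in>M. g u < t} = j - 1})
                      else {g \<in> PiE M (\<lambda>_. {..<N}). card {u\<in>M. g u < t} = j})"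
      by auto
    finally show "card {g \<in> PiE M (\<lambda>_. {..<N}). card {u\<in>insert x M. (g(x:=a)) u < t} = j}
        = (if a < t then (if j = 0 then 0 else F (j - 1)) else F j)"
      by (simp add: F_def)
  qed
  also have "\<dots> = t * (if j = 0 then 0 else F (j - 1)) + (N - t) * F j"
    by (rule sum_if_less[OF assms(2)])
  also have "\<dots> = (card (insert x M) choose j) * t^j * (N-t)^(card (insert x M) - j)"
  proof -
    have cM: "card (insert x M) = Suc (card M)" using insert by simp
    have Fj: "F i = (card M choose i) * t^i * (N-t)^(card M - i)" for i
      unfolding F_def by (rule insert.IH)
    show ?thesis
    proof (cases j)
      case 0
      then show ?thesis using cM Fj by simp
    next
      case (Suc i)
      show ?thesis
      proof (cases "Suc i \<le> card M")
        case True
        then have "card M - i = Suc (card M - Suc i)" by simp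
        moreover have "t * (A * t^i * s^(Suc p)) + s * (B * t^(Suc i) * s^p) = (A + B) * t^(Suc i) * s^(Suc p)"
          for A B s p :: nat by (simp add: algebra_simps)
        ultimately show ?thesis using Suc cM Fj True by simp
      next
        case False
        then show ?thesis using Suc cM Fj by (cases "i = card M") (auto simp: binomial_eq_0)
      qed
    qed
  qed
  finally show ?case .
qed


lemma vandermonde_diag:
  "(\<Sum>t\<le>N. (t choose a) * ((N - t) choose b)) = Suc N choose (a + b + 1)"
proof (induction N arbitrary: b)
  case 0
  then show ?case by (cases b) (auto simp: binomial_eq_0)
next
  case (Suc N)
  show ?case
  proof (cases b)
    case 0
    then show ?thesis using sum_choose_upper[where n="Suc N" and m=a] by (simp del: binomial_Suc_Suc)
  next
    case (Suc c)
    have "(\<Sum>t\<le>Suc N. (t choose a) * ((Suc N - t) choose b))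
        = (\<Sum>t\<le>N. (t choose a) * ((Suc N - t) choose b))"
      using Suc by simp
    also have "\<dots> = (\<Sum>t\<le>N. (t choose a) * ((N - t) choose c) + (t choose a) * ((N - t) choose b))"
    proof (rule sum.cong[OF refl])
      fix t assume "t \<in> {..N}"
      then have "Suc N - t = Suc (N - t)" by auto
      then show "(t choose a) * ((Suc N - t) choose b) = (t choose a) * ((N - t) choose c) + (t choose a) * ((N - t) choose b)"
        using Suc by (simp add: algebra_simps)
    qed
    also have "\<dots> = (Suc N choose (a + c + 1)) + (Suc N choose (a + b + 1))"
      by (simp add: sum.distrib Suc.IH)
    also have "\<dots> = Suc (Suc N) choose (a + b + 1)" using Suc by simp
    finally show ?thesis .
  qed
qed

lemma choose_fact_ge: "(n + 1 - k) ^ k \<le> (n choose k) * fact k"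
proof (induction k arbitrary: n)
  case 0
  then show ?case by simp
next
  case (Suc k)
  show ?case
  proof (cases n)
    case 0
    then show ?thesis by simp
  next
    case (Suc n')
    have "(n choose Suc k) * fact (Suc k) = (Suc k * (n choose Suc k)) * fact k"
      by (simp add: algebra_simps)
    also have "\<dots> = n * (n' choose k) * fact k"
      using binomial_absorption[of k n] Suc by (simp only: diff_Suc_1)
    also have "\<dots> \<ge> n * (n' + 1 - k) ^ k" using Suc.IH[of n'] by (simp add: mult.assoc)
    finally have *: "n * (n' + 1 - k) ^ k \<le> (n choose Suc k) * fact (Suc k)" .
    have "(n + 1 - Suc k) ^ Suc k = (n' + 1 - k) * (n' + 1 - k) ^ k" using Suc by simp
    also have "\<dots> \<le> n * (n' + 1 - k) ^ k" using Suc by (intro mult_right_mono) auto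
    finally show ?thesis using * by linarith
  qed
qed

definition TT :: "nat \<Rightarrow> nat \<Rightarrow> nat \<Rightarrow> nat" where
  "TT m j N = (\<Sum>t\<le>N. (m choose j) * t^j * (N - t)^(m - j))"

lemma TT_sum: "(\<Sum>j\<le>m. TT m j N) = Suc N * N ^ m"
proof -
  have "(\<Sum>j\<le>m. TT m j N) = (\<Sum>t\<le>N. \<Sum>j\<le>m. (m choose j) * t^j * (N - t)^(m - j))"
    unfolding TT_def by (rule sum.swap)
  also have "\<dots> = (\<Sum>t\<le>N. N^m)"
  proof (rule sum.cong[OF refl])
    fix x assume "x \<in> {..N}"
    from binomial[of x "N - x" m] have "(x + (N-x))^m = (\<Sum>k\<le>m. (m choose k) * x^k * (N-x)^(m-k))" by simp
    then show "(\<Sum>k\<le>m. (m choose k) * x^k * (N-x)^(m-k)) = N^m" using \<open>x \<in> {..N}\<close> by simp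
  qed
  finally show ?thesis by simp
qed

lemma TT_lower:
  assumes "j \<le> m"
  shows "fact m * (Suc N choose Suc m) \<le> TT m j N"
proof -
  have "fact m * (Suc N choose Suc m) = (\<Sum>t\<le>N. fact m * ((t choose j) * ((N - t) choose (m - j))))"
    using vandermonde_diag[where N=N and a=j and b="m - j"] assms
    by (simp only: sum_distrib_left[symmetric]) (simp del: binomial_Suc_Suc)
  also have "\<dots> \<le> TT m j N"
    unfolding TT_def
  proof (rule sum_mono)
    fix t assume "t \<in> {..N}"
    have f: "fact m = (m choose j) * fact j * fact (m - j)"
      using binomial_fact_lemma[OF assms] by (simp add: algebra_simps)
    have "fact m * ((t choose j) * ((N - t) choose (m - j)))
        = (m choose j) * ((t choose j) * fact j) * (((N - t) choose (m - j)) * fact (m - j))"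
      unfolding f by (simp add: algebra_simps)
    also have "\<dots> \<le> (m choose j) * t^j * (N - t)^(m - j)"
      using mult_mono[OF binomial_fact_pow[of t j] binomial_fact_pow[of "N - t" "m - j"]]
      by (simp add: mult.assoc mult_left_mono)
    finally show "fact m * ((t choose j) * ((N - t) choose (m - j))) \<le> (m choose j) * t^j * (N - t)^(m - j)" .
  qed
  finally show ?thesis .
qed

lemma TT_lower_real:
  assumes "j \<le> m" "m \<le> N" "0 < N"
  shows "(real N ^ Suc m - real (Suc m) * m * real N ^ m) / Suc m \<le> real (TT m j N)"
proof -
  have "(N + 1 - m) ^ Suc m \<le> (Suc N choose Suc m) * fact (Suc m)"
    using choose_fact_ge[of "Suc N" "Suc m"] by simp
  also have "\<dots> = Suc m * (fact m * (Suc N choose Suc m))" by (simp add: algebra_simps)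
  also have "\<dots> \<le> Suc m * TT m j N" by (rule mult_left_mono[OF TT_lower[OF assms(1)]]) simp
  finally have A: "real ((N + 1 - m) ^ Suc m) \<le> real (Suc m) * real (TT m j N)"
    by (metis of_nat_le_iff of_nat_mult)
  have B: "real N ^ Suc m - real (Suc m) * m * real N ^ m \<le> real (N - m) ^ Suc m"
  proof -
    have x: "-1 \<le> - (real m / real N)" using assms by (simp add: field_simps)
    have "1 + real (Suc m) * (- (real m / real N)) \<le> (1 + - (real m / real N)) ^ Suc m"
      by (rule Bernoulli_inequality[OF x])
    then have "real N ^ Suc m * (1 + real (Suc m) * (- (real m / real N))) \<le> real N ^ Suc m * (1 + - (real m / real N)) ^ Suc m"
      by (rule mult_left_mono) simp
    also have "\<dots> = (real N * (1 + - (real m / real N))) ^ Suc m" by (simp add: power_mult_distrib)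
    also have "real N * (1 + - (real m / real N)) = real (N - m)" using assms by (simp add: field_simps)
    also have "real N ^ Suc m * (1 + real (Suc m) * (- (real m / real N))) = real N ^ Suc m - real (Suc m) * m * real N ^ m"
      using assms by (simp add: field_simps)
    finally show ?thesis .
  qed
  have C: "real (N - m) ^ Suc m \<le> real ((N + 1 - m) ^ Suc m)"
    unfolding of_nat_power by (rule power_mono) auto
  from A B C show ?thesis by (simp add: field_simps)
qed

lemma TT_upper:
  assumes "j \<le> m" "m \<le> N" "0 < N"
  shows "real (TT m j N) \<le> real N ^ Suc m / Suc m + (Suc m)^2 * real N ^ m"
proof -
  define L where "L = (real N ^ Suc m - real (Suc m) * m * real N ^ m) / Suc m"
  have "real (Suc N * N ^ m) = (\<Sum>i\<le>m. real (TT m i N))"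
    unfolding TT_sum[symmetric] by simp
  also have "\<dots> = real (TT m j N) + (\<Sum>i\<in>{..m} - {j}. real (TT m i N))"
    using assms by (subst sum.remove[of _ j]) auto
  also have "(\<Sum>i\<in>{..m} - {j}. real (TT m i N)) \<ge> (\<Sum>i\<in>{..m} - {j}. L)"
    unfolding L_def by (rule sum_mono, rule TT_lower_real) (use assms in auto)
  moreover have "(\<Sum>i\<in>{..m} - {j}. L) = real m * L"
    using assms by simp
  ultimately have "real (TT m j N) + real m * L \<le> real (Suc N * N ^ m)"
    by linarith
  then have "real (TT m j N) + real m * L \<le> real (Suc N) * real N ^ m"
    by (simp add: algebra_simps)
  then have "real (TT m j N) \<le> (real N + 1) * real N ^ m - real m * L" by (simp add: algebra_simps)
  also have "\<dots> = real N ^ Suc m / Suc m + (1 + real m * m) * real N ^ m"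
    unfolding L_def by (simp add: field_simps)
  also have "\<dots> \<le> real N ^ Suc m / Suc m + (Suc m)^2 * real N ^ m"
    by (intro add_left_mono mult_right_mono) (auto simp: power2_eq_square)
  finally show ?thesis .
qed


lemma sum_rev_le:
  fixes h :: "nat \<Rightarrow> nat"
  shows "(\<Sum>a<N. h (N - a)) \<le> (\<Sum>t\<le>N. h t)"
proof -
  have inj: "inj_on (\<lambda>a. N - a) {..<N}" by (rule inj_onI) auto
  have "(\<Sum>a<N. h (N - a)) = (\<Sum>t\<in>(\<lambda>a. N - a) ` {..<N}. h t)"
    by (simp add: sum.reindex[OF inj])
  also have "\<dots> \<le> (\<Sum>t\<le>N. h t)" by (rule sum_mono2) auto
  finally show ?thesis .
qed

lemma F_sum_bound:
  assumes "m \<le> N" "0 < N"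
  shows "real (\<Sum>a<N. (m choose j) * (N - a)^j * (N - (N - a))^(m - j))
         \<le> real N ^ Suc m / Suc m + (Suc m)^2 * real N ^ m"
proof (cases "j \<le> m")
  case True
  have "(\<Sum>a<N. (m choose j) * (N - a)^j * (N - (N - a))^(m - j)) \<le> TT m j N"
    unfolding TT_def by (rule sum_rev_le[where h="\<lambda>t. (m choose j) * t^j * (N - t)^(m - j)"])
  then have "real (\<Sum>a<N. (m choose j) * (N - a)^j * (N - (N - a))^(m - j)) \<le> real (TT m j N)"
    by linarith
  also have "\<dots> \<le> real N ^ Suc m / Suc m + (Suc m)^2 * real N ^ m" by (rule TT_upper[OF True assms])
  finally show ?thesis .
next
  case False
  then show ?thesis by (simp add: binomial_eq_0)
qed

lemma count_deg_bound:
  assumes fin: "finite M" and vM: "v \<notin> M" and mN: "card M \<le> N" and N0: "0 < N"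
    and bc: "\<And>a. b a \<le> c"
  shows "real (card {y \<in> PiE (insert v M) (\<lambda>_. {..<N}). card {u\<in>M. y u + y v < N} + b (y v) = k})
         \<le> real (Suc c) * (real N ^ Suc (card M) / Suc (card M) + (Suc (card M))^2 * real N ^ card M)"
proof -
  define m where "m = card M"
  define U where "U = real N ^ Suc m / Suc m + (Suc m)^2 * real N ^ m"
  define F where "F a j = (m choose j) * (N - a)^j * (N - (N - a))^(m - j)" for a j
  have inner: "card {g \<in> PiE M (\<lambda>_. {..<N}). card {u\<in>M. (g(v:=a)) u + (g(v:=a)) v < N} + b ((g(v:=a)) v) = k}
        \<le> (\<Sum>i\<le>c. if i \<le> k then F a (k - i) else 0)" if "a < N" for a
  proof -
    have "{g \<in> PiE M (\<lambda>_. {..<N}). card {u\<in>M. (g(v:=a)) u + (g(v:=a)) v < N} + b ((g(v:=a)) v) = k}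
        = {g \<in> PiE M (\<lambda>_. {..<N}). card {u\<in>M. g u < N - a} + b a = k}"
    proof -
      have "{u\<in>M. (g(v:=a)) u + (g(v:=a)) v < N} = {u\<in>M. g u < N - a}" for g
        using vM by auto
      then show ?thesis by simp
    qed
    also have "\<dots> \<subseteq> (if b a \<le> k then {g \<in> PiE M (\<lambda>_. {..<N}). card {u\<in>M. g u < N - a} = k - b a} else {})"
      by auto
    finally have "card {g \<in> PiE M (\<lambda>_. {..<N}). card {u\<in>M. (g(v:=a)) u + (g(v:=a)) v < N} + b ((g(v:=a)) v) = k}
        \<le> card (if b a \<le> k then {g \<in> PiE M (\<lambda>_. {..<N}). card {u\<in>M. g u < N - a} = k - b a} else {})"
      by (rule card_mono[rotated]) (auto intro!: finite_PiE fin)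
    also have "\<dots> = (if b a \<le> k then F a (k - b a) else 0)"
      using count_below[OF fin, of "N - a" N "k - b a"] unfolding F_def m_def by simp
    also have "\<dots> \<le> (\<Sum>i\<le>c. if i \<le> k then F a (k - i) else 0)"
    proof (cases "b a \<le> k")
      case True
      show ?thesis
        using member_le_sum[of "b a" "{..c}" "\<lambda>i. if i \<le> k then F a (k - i) else 0"] bc[of a] True
        by simp
    qed simp
    finally show ?thesis .
  qed
  have "card {y \<in> PiE (insert v M) (\<lambda>_. {..<N}). card {u\<in>M. y u + y v < N} + b (y v) = k}
      = (\<Sum>a<N. card {g \<in> PiE M (\<lambda>_. {..<N}). card {u\<in>M. (g(v:=a)) u + (g(v:=a)) v < N} + b ((g(v:=a)) v) = k})"
    by (rule card_PiE_insert) (use fin vM in auto)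
  also have "\<dots> \<le> (\<Sum>a<N. \<Sum>i\<le>c. if i \<le> k then F a (k - i) else 0)"
    by (rule sum_mono) (use inner in auto)
  also have "\<dots> = (\<Sum>i\<le>c. \<Sum>a<N. if i \<le> k then F a (k - i) else 0)"
    by (rule sum.swap)
  finally have A0: "real (card {y \<in> PiE (insert v M) (\<lambda>_. {..<N}). card {u\<in>M. y u + y v < N} + b (y v) = k})
      \<le> real (\<Sum>i\<le>c. \<Sum>a<N. if i \<le> k then F a (k - i) else 0)"
    by (simp only: of_nat_le_iff)
  have A: "real (card {y \<in> PiE (insert v M) (\<lambda>_. {..<N}). card {u\<in>M. y u + y v < N} + b (y v) = k})
      \<le> (\<Sum>i\<le>c. real (\<Sum>a<N. if i \<le> k then F a (k - i) else 0))"
    using A0 by (simp only: of_nat_sum)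
  also have "\<dots> \<le> (\<Sum>i\<le>c. U)"
  proof (rule sum_mono)
    fix i assume "i \<in> {..c}"
    show "real (\<Sum>a<N. if i \<le> k then F a (k - i) else 0) \<le> U"
    proof (cases "i \<le> k")
      case True
      then show ?thesis using F_sum_bound[of m N "k - i"] mN N0 unfolding U_def F_def m_def by simp
    next
      case False
      have "0 \<le> U" unfolding U_def by simp
      then show ?thesis using False by simp
    qed
  qed
  also have "\<dots> = real (Suc c) * U" by simp
  finally show ?thesis unfolding U_def m_def .
qed


definition nbr :: "nat set set \<Rightarrow> nat \<Rightarrow> nat set" where
  "nbr G v = {u. {u, v} \<in> G}"

lemma nbr_sym: "u \<in> nbr G v \<longleftrightarrow> v \<in> nbr G u"
  unfolding nbr_def mem_Collect_eq by (subst insert_commute) (rule refl)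

lemma nbr_sub: "is_graph n G \<Longrightarrow> nbr G v \<subseteq> {..<n}"
  by (auto simp: nbr_def is_graph_def)

lemma nbr_finite: "is_graph n G \<Longrightarrow> finite (nbr G v)"
  by (rule finite_subset[OF nbr_sub]) auto

lemma nbr_irrefl: "is_graph n G \<Longrightarrow> v \<notin> nbr G v"
  unfolding nbr_def is_graph_def by force

lemma degree_nbr:
  assumes "is_graph n G"
  shows "degree G v = card (nbr G v)"
proof -
  have "{e\<in>G. v \<in> e} = (\<lambda>u. {u, v}) ` nbr G v"
  proof (rule set_eqI, rule iffI)
    fix e assume e: "e \<in> {e\<in>G. v \<in> e}"
    then have "card e = 2" using assms by (auto simp: is_graph_def)
    then obtain a b where ab: "e = {a, b}" "a \<noteq> b" by (auto simp: card_2_iff)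
    show "e \<in> (\<lambda>u. {u, v}) ` nbr G v"
    proof (cases "a = v")
      case True
      then have "e = {b, v}" using ab by auto
      then show ?thesis using e by (auto simp: nbr_def intro!: image_eqI[where x=b])
    next
      case False
      then have "b = v" using e ab by auto
      then show ?thesis using e ab by (auto simp: nbr_def intro!: image_eqI[where x=a])
    qed
  qed (auto simp: nbr_def)
  moreover have "inj_on (\<lambda>u. {u, v}) (nbr G v)"
    using nbr_irrefl[OF assms, of v] by (rule_tac inj_onI) (auto simp: doubleton_eq_iff)
  ultimately show ?thesis unfolding degree_def by (simp add: card_image)
qed

definition Hx :: "nat set set \<Rightarrow> nat \<Rightarrow> (nat \<Rightarrow> nat) \<Rightarrow> nat set set" where
  "Hx G N x = {e\<in>G. (\<Sum>u\<in>e. x u) < N}"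

lemma Hx_graph: "is_graph n G \<Longrightarrow> is_graph n (Hx G N x)"
  by (auto simp: is_graph_def Hx_def)

lemma nbr_Hx:
  assumes "is_graph n G"
  shows "nbr (Hx G N x) v = {u\<in>nbr G v. x u + x v < N}"
proof -
  have "u \<noteq> v" if "u \<in> nbr G v" for u using that nbr_irrefl[OF assms] by auto
  then show ?thesis by (auto simp: nbr_def Hx_def)
qed

lemma degree_Hx:
  assumes "is_graph n G"
  shows "degree (Hx G N x) v = card {u\<in>nbr G v. x u + x v < N}"
  using degree_nbr[OF Hx_graph[OF assms]] nbr_Hx[OF assms] by simp


definition dg :: "nat set set \<Rightarrow> nat \<Rightarrow> (nat \<Rightarrow> nat) \<Rightarrow> nat \<Rightarrow> nat" where
  "dg G N x v = card {u\<in>nbr G v. x u + x v < N}"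

lemma pair_bound:
  assumes gr: "is_graph n G" and reg: "\<And>v. v < n \<Longrightarrow> card (nbr G v) = D"
    and vw: "v < n" "w < n" "v \<noteq> w" "w \<notin> nbr G v" and N0: "0 < N" and DN: "D \<le> N"
  shows "real (card {x \<in> PiE {..<n} (\<lambda>_. {..<N}). dg G N x v = dg G N x w})
    \<le> real N ^ n * (real (Suc (card (nbr G v \<inter> nbr G w)))
         * (1 / Suc (D - card (nbr G v \<inter> nbr G w)) + (Suc (D - card (nbr G v \<inter> nbr G w)))^2 / real N))"
proof -
  define C where "C = nbr G v \<inter> nbr G w"
  define c where "c = card C"
  define m where "m = D - c"
  define M where "M = nbr G v - C"
  define A where "A = insert v M"
  define J where "J = {..<n} - A"
  have finv: "finite (nbr G v)" by (rule nbr_finite[OF gr])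
  have cardv: "card (nbr G v) = D" using reg vw by simp
  have CM: "C \<subseteq> nbr G v" unfolding C_def by auto
  have cardM: "card M = m" unfolding M_def m_def c_def using card_Diff_subset[OF finite_subset[OF CM finv] CM] cardv by simp
  have finM: "finite M" unfolding M_def using finv by simp
  have vM: "v \<notin> M" unfolding M_def using nbr_irrefl[OF gr] by auto
  have Asub: "A \<subseteq> {..<n}" unfolding A_def M_def using nbr_sub[OF gr, of v] vw by auto
  have UN: "{..<n} = A \<union> J" unfolding J_def using Asub by auto
  have disj: "A \<inter> J = {}" unfolding J_def by auto
  have finA: "finite A" using Asub finite_subset by auto
  have finJ: "finite J" unfolding J_def by simp
  have cardA: "card A = Suc m" unfolding A_def using finM vM cardM by simp
  have cardJ: "card J = n - Suc m" unfolding J_def using cardA Asub by (simp add: card_Diff_subset finA)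
  have mn: "Suc m \<le> n" using cardA Asub by (metis card_lessThan card_mono finite_lessThan)
  have mD: "m \<le> N" unfolding m_def using DN by simp
  have cD: "c \<le> D" unfolding c_def using card_mono[OF finv CM] cardv by simp
  define U where "U = real (Suc c) * (real N ^ Suc m / Suc m + (Suc m)^2 * real N ^ m)"
  have inner: "card {y \<in> PiE A (\<lambda>_. {..<N}). dg G N (merge A y z) v = dg G N (merge A y z) w} \<le> U"
    if z: "z \<in> PiE J (\<lambda>_. {..<N})" for z
  proof -
    define b where "b a = card {u\<in>C. z u + a < N}" for a
    have bc: "b a \<le> c" for a unfolding b_def c_def
      by (rule card_mono) (use finite_subset[OF CM finv] in auto)
    have wA: "w \<notin> A" unfolding A_def M_def C_def using vw by auto
    have nwA: "u \<notin> A" if "u \<in> nbr G w" for u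
      using that vw nbr_sym[of v G w] unfolding A_def M_def C_def by auto
    have dgw: "dg G N (merge A y z) w = dg G N z w" for y
      unfolding dg_def merge_def using wA nwA by (intro arg_cong[where f=card]) auto
    have CA: "u \<notin> A" if "u \<in> C" for u
      using that nbr_irrefl[OF gr, of v] unfolding A_def M_def C_def by auto
    have dgv: "dg G N (merge A y z) v = card {u\<in>M. y u + y v < N} + b (y v)" for y
    proof -
      have split: "{u\<in>nbr G v. merge A y z u + merge A y z v < N}
          = {u\<in>M. y u + y v < N} \<union> {u\<in>C. z u + y v < N}"
        unfolding merge_def using CA CM by (auto simp: A_def M_def)
      have "card ({u\<in>M. y u + y v < N} \<union> {u\<in>C. z u + y v < N})
          = card {u\<in>M. y u + y v < N} + card {u\<in>C. z u + y v < N}"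
        by (rule card_Un_disjoint) (use finM finite_subset[OF CM finv] in \<open>auto simp: M_def\<close>)
      then show ?thesis unfolding dg_def split b_def by simp
    qed
    have "{y \<in> PiE A (\<lambda>_. {..<N}). dg G N (merge A y z) v = dg G N (merge A y z) w}
        = {y \<in> PiE (insert v M) (\<lambda>_. {..<N}). card {u\<in>M. y u + y v < N} + b (y v) = dg G N z w}"
      using dgv dgw unfolding A_def by simp
    then have "real (card {y \<in> PiE A (\<lambda>_. {..<N}). dg G N (merge A y z) v = dg G N (merge A y z) w})
        \<le> real (Suc c) * (real N ^ Suc (card M) / Suc (card M) + (Suc (card M))^2 * real N ^ card M)"
      using count_deg_bound[OF finM vM _ N0 bc, where k="dg G N z w"] cardM mD by simp
    then show ?thesis unfolding U_def cardM .
  qed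
  have "card {x \<in> PiE {..<n} (\<lambda>_. {..<N}). dg G N x v = dg G N x w}
      = (\<Sum>z\<in>PiE J (\<lambda>_. {..<N}). card {y \<in> PiE A (\<lambda>_. {..<N}). dg G N (merge A y z) v = dg G N (merge A y z) w})"
    unfolding UN by (rule card_PiE_split[OF finA finJ disj]) simp
  then have "real (card {x \<in> PiE {..<n} (\<lambda>_. {..<N}). dg G N x v = dg G N x w})
      = (\<Sum>z\<in>PiE J (\<lambda>_. {..<N}). real (card {y \<in> PiE A (\<lambda>_. {..<N}). dg G N (merge A y z) v = dg G N (merge A y z) w}))"
    by simp
  also have "\<dots> \<le> (\<Sum>z\<in>PiE J (\<lambda>_. {..<N}). U)"
    by (rule sum_mono) (rule inner)
  also have "\<dots> = real N ^ (n - Suc m) * U"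
    using finJ cardJ by (simp add: card_PiE)
  also have "\<dots> = real N ^ n * (real (Suc c) * (1 / Suc m + (Suc m)^2 / real N))"
  proof -
    have e1: "real N ^ (n - Suc m) * real N ^ Suc m = real N ^ n"
      using mn by (metis le_add_diff_inverse2 power_add)
    have e2: "real N ^ (n - Suc m) * real N ^ m = real N ^ n / real N"
      using e1 N0 by (simp add: field_simps)
    have "real N ^ (n - Suc m) * U
        = real (Suc c) * ((real N ^ (n - Suc m) * real N ^ Suc m) / Suc m
           + (Suc m)^2 * (real N ^ (n - Suc m) * real N ^ m))"
      unfolding U_def by (simp add: algebra_simps)
    also have "\<dots> = real N ^ n * (real (Suc c) * (1 / Suc m + (Suc m)^2 / real N))"
      unfolding e1 e2 by (simp add: field_simps)
    finally show ?thesis .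
  qed
  finally show ?thesis unfolding m_def c_def C_def .
qed


lemma frac_bound:
  fixes c D :: nat
  assumes "c \<le> D"
  shows "min 1 (real (Suc c) / Suc (D - c)) \<le> 1 / Suc D + 4 * real c / Suc D"
proof (cases "2 * c \<le> D")
  case True
  have D1: "real (Suc (D - c)) = real D + 1 - real c" using assms by simp
  have "(1 + 4 * real c) * (real D + 1 - real c) - (real c + 1) * (real D + 1) = real c * (3 * real D + 2 - 4 * real c)"
    by (simp add: algebra_simps)
  moreover have "0 \<le> real c * (3 * real D + 2 - 4 * real c)" using True by simp
  ultimately have "(real c + 1) * (real D + 1) \<le> (1 + 4 * real c) * (real D + 1 - real c)" by linarith
  moreover have "0 < real D + 1 - real c" using assms by simp
  ultimately have "(real c + 1) / (real D + 1 - real c) \<le> (1 + 4 * real c) / (real D + 1)"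
    by (simp add: divide_simps)
  then have "real (Suc c) / Suc (D - c) \<le> 1 / Suc D + 4 * real c / Suc D"
    unfolding D1 by (simp add: add_divide_distrib add.commute)
  then show ?thesis by linarith
next
  case False
  then have "real D + 1 \<le> 4 * real c" by linarith
  then have "1 \<le> 4 * real c / Suc D" by (simp add: field_simps)
  moreover have "0 \<le> 1 / real (Suc D)" by simp
  ultimately show ?thesis by linarith
qed

lemma pair_bound2:
  assumes gr: "is_graph n G" and reg: "\<And>v. v < n \<Longrightarrow> card (nbr G v) = D"
    and vw: "v < n" "w < n" and N0: "0 < N" and DN: "D \<le> N"
  shows "real (card {x \<in> PiE {..<n} (\<lambda>_. {..<N}). dg G N x v = dg G N x w})
    \<le> real N ^ n * ((if v = w \<or> w \<in> nbr G v then 1 else 0) + 1 / Suc D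
         + 4 * real (card (nbr G v \<inter> nbr G w)) / Suc D
         + real (Suc (card (nbr G v \<inter> nbr G w))) * (Suc D)^2 / real N)"
proof -
  define c where "c = card (nbr G v \<inter> nbr G w)"
  have cD: "c \<le> D" unfolding c_def using reg[OF vw(1)] nbr_finite[OF gr]
    by (metis card_mono inf_le1)
  have triv: "real (card {x \<in> PiE {..<n} (\<lambda>_. {..<N}). dg G N x v = dg G N x w}) \<le> real N ^ n"
  proof -
    have "card {x \<in> PiE {..<n} (\<lambda>_. {..<N}). dg G N x v = dg G N x w} \<le> card (PiE {..<n} (\<lambda>_. {..<N}))"
      by (rule card_mono) (auto intro!: finite_PiE)
    then show ?thesis by (simp add: card_PiE)
  qed
  have nn: "0 \<le> 1 / real (Suc D) + 4 * real c / Suc D + real (Suc c) * (Suc D)^2 / real N" by simp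
  show ?thesis
  proof (cases "v = w \<or> w \<in> nbr G v")
    case True
    have "real N ^ n \<le> real N ^ n * (1 + 1 / real (Suc D) + 4 * real c / Suc D + real (Suc c) * (Suc D)^2 / real N)"
      using nn by (simp add: algebra_simps)
    then have "real (card {x \<in> PiE {..<n} (\<lambda>_. {..<N}). dg G N x v = dg G N x w})
       \<le> real N ^ n * (1 + 1 / real (Suc D) + 4 * real c / Suc D + real (Suc c) * (Suc D)^2 / real N)"
      using triv by linarith
    then show ?thesis using True unfolding c_def by simp
  next
    case False
    have pb: "real (card {x \<in> PiE {..<n} (\<lambda>_. {..<N}). dg G N x v = dg G N x w})
      \<le> real N ^ n * (real (Suc c) * (1 / Suc (D - c) + (Suc (D - c))^2 / real N))"
      using pair_bound[OF gr reg vw _ _ N0 DN] False unfolding c_def by auto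
    have sq: "real (Suc (D - c))^2 \<le> real (Suc D)^2" by (rule power_mono) auto
    have "real (Suc c) * (1 / Suc (D - c) + (Suc (D - c))^2 / real N)
        = real (Suc c) / Suc (D - c) + real (Suc c) * (Suc (D - c))^2 / real N"
      by (simp add: algebra_simps)
    also have "real (Suc c) * (Suc (D - c))^2 / real N \<le> real (Suc c) * (Suc D)^2 / real N"
      using sq N0 by (intro divide_right_mono mult_left_mono) auto
    finally have A: "real (Suc c) * (1 / Suc (D - c) + (Suc (D - c))^2 / real N)
        \<le> real (Suc c) / Suc (D - c) + real (Suc c) * (Suc D)^2 / real N" by simp
    have B: "real (card {x \<in> PiE {..<n} (\<lambda>_. {..<N}). dg G N x v = dg G N x w})
      \<le> real N ^ n * min 1 (real (Suc c) / Suc (D - c)) + real N ^ n * (real (Suc c) * (Suc D)^2 / real N)"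
    proof (cases "real (Suc c) / Suc (D - c) \<le> 1")
      case True
      have "real N ^ n * (real (Suc c) * (1 / Suc (D - c) + (Suc (D - c))^2 / real N))
          \<le> real N ^ n * (real (Suc c) / Suc (D - c) + real (Suc c) * (Suc D)^2 / real N)"
        by (rule mult_left_mono[OF A]) simp
      then show ?thesis using pb True by (simp add: algebra_simps)
    next
      case False
      have "0 \<le> real N ^ n * (real (Suc c) * (Suc D)^2 / real N)" by simp
      moreover have "min 1 (real (Suc c) / Suc (D - c)) = 1" using False by simp
      ultimately show ?thesis using triv by linarith
    qed
    have "real N ^ n * min 1 (real (Suc c) / Suc (D - c)) \<le> real N ^ n * (1 / Suc D + 4 * real c / Suc D)"
      by (rule mult_left_mono[OF frac_bound[OF cD]]) simp
    then show ?thesis using B False unfolding c_def[symmetric] by (simp add: algebra_simps)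
  qed
qed


lemma sum_ind: "finite A \<Longrightarrow> (\<Sum>u\<in>A. if u \<in> S then 1 else 0 :: real) = real (card (A \<inter> S))"
  by (simp add: sum.If_cases)

lemma sum_delta:
  assumes gr: "is_graph n G" and reg: "\<And>v. v < n \<Longrightarrow> card (nbr G v) = D" and v: "v < n"
  shows "(\<Sum>w<n. (if v = w \<or> w \<in> nbr G v then 1 else 0 :: real)) = real D + 1"
proof -
  have "(\<Sum>w<n. (if v = w \<or> w \<in> nbr G v then 1 else 0 :: real)) = (\<Sum>w<n. (if w \<in> insert v (nbr G v) then 1 else 0 :: real))"
    by (rule sum.cong) auto
  also have "\<dots> = real (card ({..<n} \<inter> insert v (nbr G v)))"
    by (rule sum_ind) simp
  also have "{..<n} \<inter> insert v (nbr G v) = insert v (nbr G v)"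
    using nbr_sub[OF gr, of v] v by auto
  also have "card (insert v (nbr G v)) = Suc D"
    using nbr_irrefl[OF gr, of v] nbr_finite[OF gr, of v] reg[OF v] by simp
  finally show ?thesis by simp
qed

lemma sum_common:
  assumes gr: "is_graph n G" and reg: "\<And>v. v < n \<Longrightarrow> card (nbr G v) = D"
  shows "(\<Sum>v<n. \<Sum>w<n. real (card (nbr G v \<inter> nbr G w))) = real n * real D ^ 2"
proof -
  define I where "I u v = (if u \<in> nbr G v then 1 else 0 :: real)" for u v
  have c1: "real (card (nbr G v \<inter> nbr G w)) = (\<Sum>u<n. I u v * I u w)" for v w
  proof -
    have "(\<Sum>u<n. I u v * I u w) = (\<Sum>u<n. if u \<in> nbr G v \<inter> nbr G w then 1 else 0)"
      unfolding I_def by (rule sum.cong) auto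
    also have "\<dots> = real (card ({..<n} \<inter> (nbr G v \<inter> nbr G w)))"
      by (rule sum_ind) simp
    also have "{..<n} \<inter> (nbr G v \<inter> nbr G w) = nbr G v \<inter> nbr G w" using nbr_sub[OF gr, of v] by auto
    finally show ?thesis by simp
  qed
  have c2: "(\<Sum>v<n. I u v) = real D" if "u < n" for u
  proof -
    have "(\<Sum>v<n. I u v) = (\<Sum>v<n. if v \<in> nbr G u then 1 else 0)"
      unfolding I_def by (rule sum.cong) (auto simp: nbr_sym)
    also have "\<dots> = real (card ({..<n} \<inter> nbr G u))" by (rule sum_ind) simp
    also have "{..<n} \<inter> nbr G u = nbr G u" using nbr_sub[OF gr, of u] by auto
    finally show ?thesis using reg[OF that] by simp
  qed
  have "(\<Sum>v<n. \<Sum>w<n. real (card (nbr G v \<inter> nbr G w))) = (\<Sum>v<n. \<Sum>w<n. \<Sum>u<n. I u v * I u w)"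
    by (simp add: c1)
  also have "\<dots> = (\<Sum>v<n. \<Sum>u<n. \<Sum>w<n. I u v * I u w)"
    by (rule sum.cong[OF refl], rule sum.swap)
  also have "\<dots> = (\<Sum>u<n. \<Sum>v<n. \<Sum>w<n. I u v * I u w)"
    by (rule sum.swap)
  also have "\<dots> = (\<Sum>u<n. (\<Sum>v<n. I u v) * (\<Sum>w<n. I u w))"
    by (simp add: sum_product)
  also have "\<dots> = (\<Sum>u<n. real D * real D)"
    by (rule sum.cong) (auto simp: c2)
  finally show ?thesis by (simp add: power2_eq_square)
qed


lemma exists_le_avg:
  fixes f :: "'a \<Rightarrow> real"
  assumes "finite A" "A \<noteq> {}" "sum f A \<le> real (card A) * B"
  shows "\<exists>x\<in>A. f x \<le> B"
proof (rule ccontr)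
  assume "\<not> ?thesis"
  then have "\<And>x. x \<in> A \<Longrightarrow> B < f x" by auto
  then have "sum (\<lambda>_. B) A < sum f A" by (rule sum_strict_mono[OF assms(1,2)])
  then show False using assms(3) by simp
qed

lemma dg_le:
  assumes gr: "is_graph n G" and reg: "\<And>v. v < n \<Longrightarrow> card (nbr G v) = D" and v: "v < n"
  shows "dg G N x v \<le> D"
  unfolding dg_def using reg[OF v] nbr_finite[OF gr, of v] by (metis (no_types, lifting) card_mono mem_Collect_eq subsetI)

lemma square_identity:
  assumes gr: "is_graph n G" and reg: "\<And>v. v < n \<Longrightarrow> card (nbr G v) = D"
  shows "(\<Sum>k\<le>D. real (card {v\<in>{..<n}. dg G N x v = k}) ^ 2)
       = (\<Sum>v<n. \<Sum>w<n. if dg G N x v = dg G N x w then 1 else 0)"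
proof -
  define I where "I v k = (if dg G N x v = k then 1 else 0 :: real)" for v k
  have m: "real (card {v\<in>{..<n}. dg G N x v = k}) = (\<Sum>v<n. I v k)" for k
  proof -
    have "(\<Sum>v<n. I v k) = (\<Sum>v<n. if v \<in> {v. dg G N x v = k} then 1 else 0)"
      unfolding I_def by simp
    also have "\<dots> = real (card ({..<n} \<inter> {v. dg G N x v = k}))" by (rule sum_ind) simp
    also have "{..<n} \<inter> {v. dg G N x v = k} = {v\<in>{..<n}. dg G N x v = k}" by blast
    finally show ?thesis by simp
  qed
  have "(\<Sum>k\<le>D. real (card {v\<in>{..<n}. dg G N x v = k}) ^ 2) = (\<Sum>k\<le>D. \<Sum>v<n. \<Sum>w<n. I v k * I w k)"
    unfolding m power2_eq_square by (simp add: sum_product)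
  also have "\<dots> = (\<Sum>v<n. \<Sum>k\<le>D. \<Sum>w<n. I v k * I w k)" by (rule sum.swap)
  also have "\<dots> = (\<Sum>v<n. \<Sum>w<n. \<Sum>k\<le>D. I v k * I w k)" by (rule sum.cong[OF refl], rule sum.swap)
  also have "\<dots> = (\<Sum>v<n. \<Sum>w<n. if dg G N x v = dg G N x w then 1 else 0)"
  proof (intro sum.cong refl)
    fix v w assume v: "v \<in> {..<n}" and "w \<in> {..<n}"
    have "(\<Sum>k\<le>D. I v k * I w k) = (\<Sum>k\<le>D. if dg G N x v = k then (if dg G N x w = k then 1 else 0) else 0)"
      unfolding I_def by (rule sum.cong) auto
    also have "\<dots> = (if dg G N x v \<in> {..D} then (if dg G N x w = dg G N x v then 1 else 0) else 0)"
      by (rule sum.delta') simp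
    also have "\<dots> = (if dg G N x v = dg G N x w then 1 else 0)"
      using dg_le[OF gr reg, of v N x] v by auto
    finally show "(\<Sum>k\<le>D. I v k * I w k) = (if dg G N x v = dg G N x w then 1 else 0)" .
  qed
  finally show ?thesis .
qed

lemma sum_identity:
  assumes gr: "is_graph n G" and reg: "\<And>v. v < n \<Longrightarrow> card (nbr G v) = D"
  shows "(\<Sum>k\<le>D. real (card {v\<in>{..<n}. dg G N x v = k})) = real n"
proof -
  have "real (card {v\<in>{..<n}. dg G N x v = k}) = (\<Sum>v<n. if dg G N x v = k then 1 else 0)" for k
  proof -
    have "(\<Sum>v<n. if dg G N x v = k then 1 else 0) = (\<Sum>v<n. if v \<in> {v. dg G N x v = k} then 1 else 0 :: real)"
      by simp
    also have "\<dots> = real (card ({..<n} \<inter> {v. dg G N x v = k}))" by (rule sum_ind) simp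
    also have "{..<n} \<inter> {v. dg G N x v = k} = {v\<in>{..<n}. dg G N x v = k}" by blast
    finally show ?thesis by simp
  qed
  then have "(\<Sum>k\<le>D. real (card {v\<in>{..<n}. dg G N x v = k})) = (\<Sum>k\<le>D. \<Sum>v<n. if dg G N x v = k then 1 else 0)"
    by simp
  also have "\<dots> = (\<Sum>v<n. \<Sum>k\<le>D. if dg G N x v = k then 1 else 0)" by (rule sum.swap)
  also have "\<dots> = (\<Sum>v<n. 1)"
  proof (rule sum.cong[OF refl])
    fix v assume v: "v \<in> {..<n}"
    have "(\<Sum>k\<le>D. if dg G N x v = k then 1 else 0 :: real) = (if dg G N x v \<in> {..D} then 1 else 0)"
      by (rule sum.delta') simp
    then show "(\<Sum>k\<le>D. if dg G N x v = k then 1 else 0 :: real) = 1"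
      using dg_le[OF gr reg, of v N x] v by auto
  qed
  finally show ?thesis by simp
qed


lemma S_identity:
  fixes a :: "nat \<Rightarrow> real"
  assumes "(\<Sum>k\<le>D. a k) = real n"
  shows "(\<Sum>k\<le>D. (a k - real n / Suc D)^2) = (\<Sum>k\<le>D. (a k)^2) - real n * (real n / Suc D)"
proof -
  define q where "q = real n / Suc D"
  have "(\<Sum>k\<le>D. (a k - q)^2) = (\<Sum>k\<le>D. (a k)^2 - 2 * q * a k + q^2)"
    by (rule sum.cong) (auto simp: power2_diff)
  also have "\<dots> = (\<Sum>k\<le>D. (a k)^2) - 2 * q * (\<Sum>k\<le>D. a k) + real (Suc D) * q^2"
    by (simp add: sum.distrib sum_subtractf sum_distrib_left)
  also have "real (Suc D) * q^2 = real n * q" unfolding q_def by (simp add: power2_eq_square)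
  finally show ?thesis using assms unfolding q_def by simp
qed

lemma double_sum_lin:
  fixes dl c :: "nat \<Rightarrow> nat \<Rightarrow> real" and P a b K :: real
  shows "(\<Sum>v<n. \<Sum>w<n. P * (dl v w + a + b * c v w + K * c v w + K))
     = P * ((\<Sum>v<n. \<Sum>w<n. dl v w) + real n * real n * a + (b + K) * (\<Sum>v<n. \<Sum>w<n. c v w) + K * real n * real n)"
  by (simp add: sum.distrib sum_distrib_left algebra_simps)

lemma exists_good:
  assumes gr: "is_graph n G" and reg: "\<And>v. v < n \<Longrightarrow> card (nbr G v) = D" and n1: "1 \<le> n"
  defines "N \<equiv> (n * D^2 + n^2) * (D + 1)^2 + D + 1"
  shows "\<exists>x. \<forall>k\<le>D. \<bar>real (card {v\<in>{..<n}. dg G N x v = k}) - real n / Suc D\<bar> \<le> sqrt (6 * real n * Suc D)"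
proof -
  define \<Omega> where "\<Omega> = PiE {..<n} (\<lambda>_. {..<N})"
  define S where "S x = (\<Sum>k\<le>D. (real (card {v\<in>{..<n}. dg G N x v = k}) - real n / Suc D)^2)" for x
  define B where "B = 6 * real n * Suc D"
  have N0: "0 < N" and DN: "D \<le> N" unfolding N_def by auto
  have finO: "finite \<Omega>" unfolding \<Omega>_def by (auto intro!: finite_PiE)
  have cardO: "card \<Omega> = N ^ n" unfolding \<Omega>_def by (simp add: card_PiE)
  have neO: "\<Omega> \<noteq> {}" using cardO N0 by auto
  have Sx: "S x = (\<Sum>v<n. \<Sum>w<n. if dg G N x v = dg G N x w then 1 else 0) - real n * (real n / Suc D)" for x
  proof -
    have "S x = (\<Sum>k\<le>D. (real (card {v\<in>{..<n}. dg G N x v = k}))^2) - real n * (real n / Suc D)"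
      unfolding S_def by (rule S_identity[OF sum_identity[OF gr reg]])
    then show ?thesis using square_identity[OF gr reg, of N x] by simp
  qed
  have swap: "(\<Sum>x\<in>\<Omega>. \<Sum>v<n. \<Sum>w<n. if dg G N x v = dg G N x w then 1 else 0 :: real)
      = (\<Sum>v<n. \<Sum>w<n. real (card {x\<in>\<Omega>. dg G N x v = dg G N x w}))"
  proof -
    have "(\<Sum>x\<in>\<Omega>. \<Sum>v<n. \<Sum>w<n. if dg G N x v = dg G N x w then 1 else 0 :: real)
        = (\<Sum>v<n. \<Sum>x\<in>\<Omega>. \<Sum>w<n. if dg G N x v = dg G N x w then 1 else 0 :: real)" by (rule sum.swap)
    also have "\<dots> = (\<Sum>v<n. \<Sum>w<n. \<Sum>x\<in>\<Omega>. if dg G N x v = dg G N x w then 1 else 0 :: real)"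
      by (rule sum.cong[OF refl], rule sum.swap)
    also have "\<dots> = (\<Sum>v<n. \<Sum>w<n. real (card {x\<in>\<Omega>. dg G N x v = dg G N x w}))"
    proof (intro sum.cong refl)
      fix v w
      have "(\<Sum>x\<in>\<Omega>. if dg G N x v = dg G N x w then 1 else 0 :: real)
          = (\<Sum>x\<in>\<Omega>. if x \<in> {x. dg G N x v = dg G N x w} then 1 else 0 :: real)" by simp
      also have "\<dots> = real (card (\<Omega> \<inter> {x. dg G N x v = dg G N x w}))" by (rule sum_ind[OF finO])
      also have "\<Omega> \<inter> {x. dg G N x v = dg G N x w} = {x\<in>\<Omega>. dg G N x v = dg G N x w}" by blast
      finally show "(\<Sum>x\<in>\<Omega>. if dg G N x v = dg G N x w then 1 else 0 :: real) = real (card {x\<in>\<Omega>. dg G N x v = dg G N x w})" .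
    qed
    finally show ?thesis .
  qed
  define c where "c v w = real (card (nbr G v \<inter> nbr G w))" for v w
  define K where "K = real (Suc D)^2 / real N"
  have pb: "real (card {x\<in>\<Omega>. dg G N x v = dg G N x w})
      \<le> real N ^ n * ((if v = w \<or> w \<in> nbr G v then 1 else 0) + 1 / Suc D + (4 / Suc D) * c v w + K * c v w + K)"
    if "v < n" "w < n" for v w
  proof -
    have e: "real (Suc (card (nbr G v \<inter> nbr G w))) * (Suc D)^2 / real N = K * c v w + K"
      unfolding K_def c_def by (simp add: add_divide_distrib algebra_simps)
    define dl where "dl = (if v = w \<or> w \<in> nbr G v then 1 else 0 :: real)"
    have eq: "dl + 1 / Suc D + 4 * real (card (nbr G v \<inter> nbr G w)) / Suc D
         + real (Suc (card (nbr G v \<inter> nbr G w))) * (Suc D)^2 / real N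
        = dl + 1 / Suc D + (4 / Suc D) * c v w + K * c v w + K"
      unfolding e by (simp add: c_def)
    show ?thesis using pair_bound2[OF gr reg that N0 DN] unfolding \<Omega>_def dl_def[symmetric] eq .
  qed
  have "(\<Sum>v<n. \<Sum>w<n. real (card {x\<in>\<Omega>. dg G N x v = dg G N x w}))
      \<le> (\<Sum>v<n. \<Sum>w<n. real N ^ n * ((if v = w \<or> w \<in> nbr G v then 1 else 0) + 1 / Suc D + (4 / Suc D) * c v w + K * c v w + K))"
    by (intro sum_mono pb) auto
  also have "\<dots> = real N ^ n * ((\<Sum>v<n. \<Sum>w<n. (if v = w \<or> w \<in> nbr G v then 1 else 0))
       + real n * real n / Suc D + (4 / Suc D + K) * (\<Sum>v<n. \<Sum>w<n. c v w) + K * real n * real n)"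
    by (rule double_sum_lin[where a="1 / Suc D" and b="4 / Suc D", unfolded times_divide_eq_right mult_1_right])
  also have "(\<Sum>v<n. \<Sum>w<n. (if v = w \<or> w \<in> nbr G v then 1 else 0 :: real)) = real n * (real D + 1)"
    using sum_delta[OF gr reg] by simp
  also have "(\<Sum>v<n. \<Sum>w<n. c v w) = real n * real D ^ 2"
    unfolding c_def by (rule sum_common[OF gr reg])
  finally have A: "(\<Sum>v<n. \<Sum>w<n. real (card {x\<in>\<Omega>. dg G N x v = dg G N x w}))
      \<le> real N ^ n * (real n * (real D + 1) + real n * real n / Suc D + (4 / Suc D) * (real n * real D ^ 2)
          + K * (real n * real D ^ 2 + real n * real n))"
    by (simp add: algebra_simps)
  have K1: "K * (real n * real D ^ 2 + real n * real n) \<le> 1"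
  proof -
    have "real (Suc D)^2 * (real n * real D ^ 2 + real n * real n) \<le> real N"
      unfolding N_def by (simp add: power2_eq_square algebra_simps)
    then show ?thesis unfolding K_def using N0 by (simp add: field_simps)
  qed
  have D4: "(4 / Suc D) * (real n * real D ^ 2) \<le> 4 * real n * (real D + 1)"
  proof -
    have "real D ^ 2 \<le> (real D + 1) * (real D + 1)" by (simp add: power2_eq_square algebra_simps)
    then have "real D ^ 2 / (real D + 1) \<le> real D + 1" by (simp add: field_simps)
    then have "real n * (real D ^ 2 / (real D + 1)) \<le> real n * (real D + 1)" by (rule mult_left_mono) simp
    then show ?thesis by (simp add: field_simps)
  qed
  have n1': "1 \<le> real n * (real D + 1)"
  proof -
    have "1 \<le> real n" using n1 by simp
    then have "1 * 1 \<le> real n * (real D + 1)" by (intro mult_mono) auto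
    then show ?thesis by simp
  qed
  have "sum S \<Omega> = (\<Sum>x\<in>\<Omega>. \<Sum>v<n. \<Sum>w<n. if dg G N x v = dg G N x w then 1 else 0 :: real) - real (card \<Omega>) * (real n * (real n / Suc D))"
    unfolding Sx by (simp add: sum_subtractf)
  also have "\<dots> \<le> real N ^ n * (real n * (real D + 1) + (4 / Suc D) * (real n * real D ^ 2)
          + K * (real n * real D ^ 2 + real n * real n))"
    unfolding swap cardO using A by (simp add: algebra_simps)
  also have "\<dots> \<le> real N ^ n * B"
  proof (rule mult_left_mono)
    have b: "B = 6 * (real n * (real D + 1))" unfolding B_def by simp
    have f: "4 * real n * (real D + 1) = 4 * (real n * (real D + 1))" by simp
    show "real n * (real D + 1) + (4 / Suc D) * (real n * real D ^ 2)
          + K * (real n * real D ^ 2 + real n * real n) \<le> B"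
      using K1 D4 n1' unfolding b f by linarith
  qed simp
  finally have "sum S \<Omega> \<le> real (card \<Omega>) * B" unfolding cardO by simp
  then obtain x where x: "x \<in> \<Omega>" "S x \<le> B" using exists_le_avg[OF finO neO] by blast
  have "\<forall>k\<le>D. \<bar>real (card {v\<in>{..<n}. dg G N x v = k}) - real n / Suc D\<bar> \<le> sqrt B"
  proof (intro allI impI)
    fix k assume k: "k \<le> D"
    have "(real (card {v\<in>{..<n}. dg G N x v = k}) - real n / Suc D)^2 \<le> S x"
      unfolding S_def by (rule member_le_sum[where f="\<lambda>k. (real (card {v\<in>{..<n}. dg G N x v = k}) - real n / Suc D)^2"]) (use k in auto)
    then have "(real (card {v\<in>{..<n}. dg G N x v = k}) - real n / Suc D)^2 \<le> B" using x by simp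
    then show "\<bar>real (card {v\<in>{..<n}. dg G N x v = k}) - real n / Suc D\<bar> \<le> sqrt B"
      using real_sqrt_le_mono by fastforce
  qed
  then show ?thesis unfolding B_def by blast
qed


lemma eta_limit:
  fixes d :: "nat \<Rightarrow> nat"
  assumes lim: "(\<lambda>n. real (d n) ^ 3 * ln (real n) / real n) \<longlonglongrightarrow> 0"
  shows "(\<lambda>n. sqrt (6 * (real (d n) + 1) ^ 3 / real n)) \<longlonglongrightarrow> 0"
proof -
  have b: "(\<lambda>n. real (d n) ^ 3 / real n) \<longlonglongrightarrow> 0"
  proof (rule real_tendsto_sandwich[OF _ _ tendsto_const lim])
    show "\<forall>\<^sub>F n in sequentially. 0 \<le> real (d n) ^ 3 / real n" by simp
    show "\<forall>\<^sub>F n in sequentially. real (d n) ^ 3 / real n \<le> real (d n) ^ 3 * ln (real n) / real n"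
    proof (rule eventually_sequentiallyI[of 3])
      fix n :: nat assume n: "3 \<le> n"
      have "exp 1 \<le> real n" using exp_le n by linarith
      then have "1 \<le> ln (real n)" using n by (subst ln_ge_iff) auto
      then have "real (d n) ^ 3 * 1 \<le> real (d n) ^ 3 * ln (real n)" by (intro mult_left_mono) auto
      then show "real (d n) ^ 3 / real n \<le> real (d n) ^ 3 * ln (real n) / real n"
        by (intro divide_right_mono) auto
    qed
  qed
  have c: "(\<lambda>n. 6 * (real (d n) + 1) ^ 3 / real n) \<longlonglongrightarrow> 0"
  proof (rule real_tendsto_sandwich[OF _ _ tendsto_const])
    show "\<forall>\<^sub>F n in sequentially. 0 \<le> 6 * (real (d n) + 1) ^ 3 / real n" by simp
    show "\<forall>\<^sub>F n in sequentially. 6 * (real (d n) + 1) ^ 3 / real n \<le> 48 * (real (d n) ^ 3 / real n) + 48 * (1 / real n)"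
    proof (rule always_eventually, rule allI)
      fix n
      have "(real (d n) + 1) ^ 3 \<le> 8 * (real (d n) ^ 3 + 1)"
      proof (cases "d n = 0")
        case True then show ?thesis by simp
      next
        case False
        then have "real (d n) + 1 \<le> 2 * real (d n)" by simp
        then have "(real (d n) + 1) ^ 3 \<le> (2 * real (d n)) ^ 3" by (rule power_mono) simp
        then show ?thesis by (simp add: power_mult_distrib)
      qed
      then have "6 * (real (d n) + 1) ^ 3 \<le> 48 * (real (d n) ^ 3 + 1)" by simp
      then have "6 * (real (d n) + 1) ^ 3 / real n \<le> 48 * (real (d n) ^ 3 + 1) / real n"
        by (intro divide_right_mono) auto
      then show "6 * (real (d n) + 1) ^ 3 / real n \<le> 48 * (real (d n) ^ 3 / real n) + 48 * (1 / real n)"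
        by (simp add: add_divide_distrib)
    qed
    show "(\<lambda>n. 48 * (real (d n) ^ 3 / real n) + 48 * (1 / real n)) \<longlonglongrightarrow> 0"
      using tendsto_add[OF tendsto_mult_right_zero[OF b, of 48] tendsto_mult_right_zero[OF lim_1_over_n, of 48]]
      by (simp add: mult.commute)
  qed
  show ?thesis using tendsto_real_sqrt[OF c] by simp
qed

theorem theorem1p3:
  fixes d :: "nat \<Rightarrow> nat"
  assumes "(\<lambda>n. real (d n) ^ 3 * ln (real n) / real n) \<longlonglongrightarrow> 0"
  shows "\<exists>\<eta> :: nat \<Rightarrow> real. (\<forall>n. \<eta> n \<ge> 0) \<and> \<eta> \<longlonglongrightarrow> 0 \<and>
    (\<forall>n G. is_graph n G \<and> regular n G (d n) \<longrightarrow>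
       (\<exists>H. spanning_subgraph n H G \<and>
          (\<forall>k \<le> d n. \<bar>real (mdeg n H k) - real n / real (d n + 1)\<bar>
                        \<le> \<eta> n * (real n / real (d n + 1)))))"
proof -
  define \<eta> where "\<eta> n = sqrt (6 * (real (d n) + 1) ^ 3 / real n)" for n
  show ?thesis
  proof (intro exI[of _ \<eta>] conjI allI impI)
  show "\<And>n. 0 \<le> \<eta> n" unfolding \<eta>_def by simp
  show "\<eta> \<longlonglongrightarrow> 0" unfolding \<eta>_def by (rule eta_limit[OF assms])
  fix n G assume nG: "is_graph n G \<and> regular n G (d n)"
  define D where "D = d n"
  have gr: "is_graph n G" using nG by simp
  have reg: "card (nbr G v) = D" if "v < n" for v
    using nG that degree_nbr[OF gr, of v] unfolding regular_def D_def by simp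
  show "\<exists>H. spanning_subgraph n H G \<and>
          (\<forall>k \<le> d n. \<bar>real (mdeg n H k) - real n / real (d n + 1)\<bar> \<le> \<eta> n * (real n / real (d n + 1)))"
  proof (cases "n = 0")
    case True
    have "spanning_subgraph n {} G" unfolding spanning_subgraph_def is_graph_def by simp
    moreover have "mdeg n {} k = 0" for k unfolding mdeg_def using True by simp
    ultimately show ?thesis using True by (intro exI[of _ "{}"]) simp
  next
    case False
    then have n1: "1 \<le> n" by simp
    define N where "N = (n * D^2 + n^2) * (D + 1)^2 + D + 1"
    obtain x where x: "\<forall>k\<le>D. \<bar>real (card {v\<in>{..<n}. dg G N x v = k}) - real n / Suc D\<bar> \<le> sqrt (6 * real n * Suc D)"
      using exists_good[OF gr reg n1] unfolding N_def by blast
    define H where "H = Hx G N x"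
    have sp: "spanning_subgraph n H G"
      unfolding spanning_subgraph_def H_def using Hx_graph[OF gr] by (auto simp: Hx_def)
    have md: "mdeg n H k = card {v\<in>{..<n}. dg G N x v = k}" for k
      unfolding mdeg_def H_def dg_def degree_Hx[OF gr] ..
    have eq: "\<eta> n * (real n / real (d n + 1)) = sqrt (6 * real n * Suc D)"
    proof -
      have p: "0 \<le> real n / real (D + 1)" by simp
      have "\<eta> n * (real n / real (d n + 1)) = sqrt (6 * (real D + 1) ^ 3 / real n) * sqrt ((real n / real (D + 1))^2)"
        unfolding \<eta>_def D_def using p by simp
      also have "\<dots> = sqrt (6 * (real D + 1) ^ 3 / real n * (real n / real (D + 1))^2)"
        by (rule real_sqrt_mult[symmetric])
      also have "6 * (real D + 1) ^ 3 / real n * (real n / real (D + 1))^2 = 6 * real n * Suc D"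
      proof -
        have g: "6 * a ^ 3 / b * (b / a)^2 = 6 * b * a" if "0 < a" "0 < b" for a b :: real
          using that by (simp add: field_simps power2_eq_square power3_eq_cube)
        have "real (D + 1) = real D + 1" by simp
        then show ?thesis using g[of "real D + 1" "real n"] False by (simp add: add.commute)
      qed
      finally show ?thesis .
    qed
    show ?thesis
    proof (intro exI[of _ H] conjI sp allI impI)
      fix k assume "k \<le> d n"
      then show "\<bar>real (mdeg n H k) - real n / real (d n + 1)\<bar> \<le> \<eta> n * (real n / real (d n + 1))"
        unfolding eq md using x D_def by simp
    qed
  qed
  qed
qed

end
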